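(* Let $H=(E,\{X_i:i\in[n]\})$ be a hypergraph such that $|X_i\cap X_j|\le1$ for all distinct $i,j\in[n]$, the line graph $G_H$ is complete, and for all distinct $p,q\in[n]$ there are elements $a\in X_p$ and $b\in X_q$ such that no $i\in[n]$ has $\{a,b\}\subseteq X_i$. Let $\rho(A)=\sum_{i=1}^n\min\{|A\cap X_i|,1\}$ for $A\subseteq E$. Let $\sigma$ be any polymatroid on $E$ with $\sigma(A)=\rho(A)$ whenever either $|A|\le2$, or $|A|=3$ and $A\subseteq X_i$ for some $i\in[n]$. If $\sigma(E)<n$, then $\sigma$ is indecomposable. In particular, the truncation $T(\rho,s)$ is indecomposable whenever $$\max\{\rho(A): |A|\le2\text{ or }A\text{ is a }3\text{-element subset of a hyperedge}\}\le s<n.$$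
   Context: A polymatroid on a finite set $E$ is a function $\rho:2^E\to\mathbb{Z}$ that is normalized, non-decreasing and submodular. A hypergraph is $H=(E,\mathcal{E})$ with $E$ finite and $\mathcal{E}=\{X_i:i\in[n]\}$ a set of nonempty subsets of $E$. The line graph $G_H$ has vertex set $[n]$ with $ij$ an edge iff $i\ne j$ and $X_i\cap X_j\ne\emptyset$. A polymatroid is indecomposable if it cannot be written as a sum $r_{M_1}+\cdots+r_{M_k}$ of rank functions of matroids on its ground set for any $k$. The truncation $T(\rho,s)$ is the polymatroid $X\mapsto\min\{\rho(X),s\}$. *)

theory Defs
  imports Main
begin

definition polymatroid :: "'a set \<Rightarrow> ('a set \<Rightarrow> int) \<Rightarrow> bool" where
  "polymatroid E f \<longleftrightarrow>
     f {} = 0 \<and>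
     (\<forall>A B. A \<subseteq> B \<and> B \<subseteq> E \<longrightarrow> f A \<le> f B) \<and>
     (\<forall>A B. A \<subseteq> E \<and> B \<subseteq> E \<longrightarrow> f (A \<union> B) + f (A \<inter> B) \<le> f A + f B)"

definition matroid_rank :: "'a set \<Rightarrow> ('a set \<Rightarrow> int) \<Rightarrow> bool" where
  "matroid_rank E r \<longleftrightarrow>
     polymatroid E r \<and> (\<forall>A. A \<subseteq> E \<longrightarrow> 0 \<le> r A \<and> r A \<le> int (card A))"

definition indecomposable :: "'a set \<Rightarrow> ('a set \<Rightarrow> int) \<Rightarrow> bool" where
  "indecomposable E f \<longleftrightarrow>
     \<not> (\<exists>(k::nat) (r :: nat \<Rightarrow> 'a set \<Rightarrow> int).
          (\<forall>j<k. matroid_rank E (r j)) \<and> (\<forall>A. A \<subseteq> E \<longrightarrow> f A = (\<Sum>j<k. r j A)))"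

definition truncation :: "('a set \<Rightarrow> int) \<Rightarrow> int \<Rightarrow> 'a set \<Rightarrow> int" where
  "truncation f s = (\<lambda>X. min (f X) s)"

text \<open>A hypergraph (E, {X_i : i in [n]}) with [n] = {1..n}: finite E, the X_i are
  nonempty subsets of E, pairwise distinct (it is a set of hyperedges).\<close>
definition hypergraph :: "'a set \<Rightarrow> (nat \<Rightarrow> 'a set) \<Rightarrow> nat \<Rightarrow> bool" where
  "hypergraph E X n \<longleftrightarrow> finite E \<and> inj_on X {1..n} \<and>
     (\<forall>i\<in>{1..n}. X i \<noteq> {} \<and> X i \<subseteq> E)"

definition line_graph_adj :: "(nat \<Rightarrow> 'a set) \<Rightarrow> nat \<Rightarrow> nat \<Rightarrow> bool" where
  "line_graph_adj X i j \<longleftrightarrow> i \<noteq> j \<and> X i \<inter> X j \<noteq> {}"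

definition line_graph_complete :: "(nat \<Rightarrow> 'a set) \<Rightarrow> nat \<Rightarrow> bool" where
  "line_graph_complete X n \<longleftrightarrow>
     (\<forall>i\<in>{1..n}. \<forall>j\<in>{1..n}. i \<noteq> j \<longrightarrow> line_graph_adj X i j)"

definition hyp_rho :: "(nat \<Rightarrow> 'a set) \<Rightarrow> nat \<Rightarrow> 'a set \<Rightarrow> int" where
  "hyp_rho X n A = (\<Sum>i=1..n. min (int (card (A \<inter> X i))) 1)"

definition small_sets :: "'a set \<Rightarrow> (nat \<Rightarrow> 'a set) \<Rightarrow> nat \<Rightarrow> 'a set set" where
  "small_sets E X n = {A. A \<subseteq> E \<and>
     (card A \<le> 2 \<or> (card A = 3 \<and> (\<exists>i\<in>{1..n}. A \<subseteq> X i)))}"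

end

theory Submission
  imports Defs
begin


definition dfc :: "('a set \<Rightarrow> int) \<Rightarrow> 'a \<Rightarrow> 'a \<Rightarrow> int" where
  "dfc r x y = r {x} + r {y} - r {x, y}"

lemma dfc_sym: "dfc r x y = dfc r y x"
  unfolding dfc_def by (simp add: insert_commute)

lemma dfc_nonneg:
  assumes "matroid_rank E r" "x \<in> E" "y \<in> E" "x \<noteq> y"
  shows "0 \<le> dfc r x y"
proof -
  have s: "\<And>A B. A \<subseteq> E \<Longrightarrow> B \<subseteq> E \<Longrightarrow> r (A \<union> B) + r (A \<inter> B) \<le> r A + r B"
    and e: "r {} = 0"
    using assms(1) unfolding matroid_rank_def polymatroid_def by blast+
  have "{x} \<subseteq> E" "{y} \<subseteq> E" using assms by auto
  from s[OF this] have "r ({x} \<union> {y}) + r ({x} \<inter> {y}) \<le> r {x} + r {y}" .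
  moreover have "{x} \<union> {y} = {x,y}" "{x} \<inter> {y} = {}" using assms(4) by auto
  ultimately show ?thesis using e unfolding dfc_def by simp
qed

lemma dfc_pos:
  assumes "matroid_rank E r" "x \<in> E" "y \<in> E" "0 < dfc r x y"
  shows "r {x} = 1 \<and> r {y} = 1 \<and> r {x, y} = 1"
proof -
  have m: "\<And>A B. A \<subseteq> B \<Longrightarrow> B \<subseteq> E \<Longrightarrow> r A \<le> r B"
    and c: "\<And>A. A \<subseteq> E \<Longrightarrow> 0 \<le> r A \<and> r A \<le> int (card A)"
    using assms(1) unfolding matroid_rank_def polymatroid_def by blast+
  have "r {x} \<le> r {x,y}" "r {y} \<le> r {x,y}" using m assms by auto
  moreover have "r {x} \<le> 1" "r {y} \<le> 1" "0 \<le> r {x}" "0 \<le> r {y}" using c[of "{x}"] c[of "{y}"] assms by auto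
  ultimately show ?thesis using assms(4) unfolding dfc_def by auto
qed

lemma par_trans:
  assumes "matroid_rank E r" "x \<in> E" "y \<in> E" "z \<in> E"
    "r {x} = 1" "r {y} = 1" "r {x, y} = 1" "r {y, z} = 1"
  shows "r {x, z} = 1"
proof -
  have m: "\<And>A B. A \<subseteq> B \<Longrightarrow> B \<subseteq> E \<Longrightarrow> r A \<le> r B"
    and s: "\<And>A B. A \<subseteq> E \<Longrightarrow> B \<subseteq> E \<Longrightarrow> r (A \<union> B) + r (A \<inter> B) \<le> r A + r B"
    using assms(1) unfolding matroid_rank_def polymatroid_def by blast+
  have "{x,y} \<subseteq> E" "{y,z} \<subseteq> E" using assms by auto
  from s[OF this] have "r ({x,y} \<union> {y,z}) + r ({x,y} \<inter> {y,z}) \<le> r {x,y} + r {y,z}" .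
  moreover have "r {y} \<le> r ({x,y} \<inter> {y,z})" by (rule m) (use assms in auto)
  moreover have "r {x,z} \<le> r ({x,y} \<union> {y,z})" by (rule m) (use assms in auto)
  moreover have "r {x} \<le> r {x,z}" by (rule m) (use assms in auto)
  ultimately show ?thesis using assms by linarith
qed

lemma triple_ineq:
  assumes "matroid_rank E r" "x \<in> E" "y \<in> E" "z \<in> E" "x \<noteq> y" "y \<noteq> z" "x \<noteq> z"
  shows "dfc r x y + dfc r y z \<le> r {x} + r {y} + r {z} - r {x, y, z}"
proof -
  have s: "\<And>A B. A \<subseteq> E \<Longrightarrow> B \<subseteq> E \<Longrightarrow> r (A \<union> B) + r (A \<inter> B) \<le> r A + r B"
    using assms(1) unfolding matroid_rank_def polymatroid_def by blast+
  have "{x,y} \<subseteq> E" "{y,z} \<subseteq> E" using assms by auto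
  from s[OF this] have "r ({x,y} \<union> {y,z}) + r ({x,y} \<inter> {y,z}) \<le> r {x,y} + r {y,z}" .
  moreover have "{x,y} \<union> {y,z} = {x,y,z}" by auto
  moreover have "{x,y} \<inter> {y,z} = {y}" using assms by auto
  ultimately show ?thesis unfolding dfc_def by simp
qed

lemma term_pair:
  assumes "x \<noteq> y"
  shows "min (int (card ({x} \<inter> S))) 1 + min (int (card ({y} \<inter> S))) 1 - min (int (card ({x,y} \<inter> S))) 1
     = (if x \<in> S \<and> y \<in> S then 1 else 0)"
  using assms by (cases "x \<in> S"; cases "y \<in> S") (simp_all add: Int_insert_left)

lemma term_triple:
  assumes "x \<noteq> y" "y \<noteq> z" "x \<noteq> z"
  shows "min (int (card ({x} \<inter> S))) 1 + min (int (card ({y} \<inter> S))) 1 + min (int (card ({z} \<inter> S))) 1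
      - min (int (card ({x,y,z} \<inter> S))) 1
     = (if x \<in> S \<and> y \<in> S \<and> z \<in> S then 2 else if (x \<in> S \<and> y \<in> S) \<or> (y \<in> S \<and> z \<in> S) \<or> (x \<in> S \<and> z \<in> S) then 1 else 0)"
  using assms by (cases "x \<in> S"; cases "y \<in> S"; cases "z \<in> S") (simp_all add: Int_insert_left)

lemma term_ind:
  assumes "finite A"
  shows "min (int (card (A \<inter> S))) 1 = (if A \<inter> S = {} then 0 else 1)"
proof -
  have "finite (A \<inter> S)" using assms by simp
  show ?thesis
  proof (cases "A \<inter> S = {}")
    case False
    then have "card (A \<inter> S) > 0" using \<open>finite (A \<inter> S)\<close> by (simp add: card_gt_0_iff)
    then show ?thesis using False by simp
  qed simp
qed

lemma rho_pair:
  assumes "x \<noteq> y"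
  shows "hyp_rho X n {x} + hyp_rho X n {y} - hyp_rho X n {x,y} = (\<Sum>i=1..n. if x \<in> X i \<and> y \<in> X i then 1 else 0)"
proof -
  have "hyp_rho X n {x} + hyp_rho X n {y} - hyp_rho X n {x,y} =
    (\<Sum>i=1..n. min (int (card ({x} \<inter> X i))) 1 + min (int (card ({y} \<inter> X i))) 1 - min (int (card ({x,y} \<inter> X i))) 1)"
    unfolding hyp_rho_def by (simp only: sum.distrib sum_subtractf)
  also have "\<dots> = (\<Sum>i=1..n. if x \<in> X i \<and> y \<in> X i then 1 else 0)"
    by (rule sum.cong[OF refl]) (rule term_pair[OF assms])
  finally show ?thesis .
qed

lemma rho_triple:
  assumes "x \<noteq> y" "y \<noteq> z" "x \<noteq> z"
  shows "hyp_rho X n {x} + hyp_rho X n {y} + hyp_rho X n {z} - hyp_rho X n {x,y,z} =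
    (\<Sum>i=1..n. if x \<in> X i \<and> y \<in> X i \<and> z \<in> X i then 2 else if (x \<in> X i \<and> y \<in> X i) \<or> (y \<in> X i \<and> z \<in> X i) \<or> (x \<in> X i \<and> z \<in> X i) then 1 else 0)"
proof -
  have "hyp_rho X n {x} + hyp_rho X n {y} + hyp_rho X n {z} - hyp_rho X n {x,y,z} =
    (\<Sum>i=1..n. min (int (card ({x} \<inter> X i))) 1 + min (int (card ({y} \<inter> X i))) 1 + min (int (card ({z} \<inter> X i))) 1
      - min (int (card ({x,y,z} \<inter> X i))) 1)"
    unfolding hyp_rho_def by (simp only: sum.distrib sum_subtractf)
  also have "\<dots> = (\<Sum>i=1..n. if x \<in> X i \<and> y \<in> X i \<and> z \<in> X i then 2 else if (x \<in> X i \<and> y \<in> X i) \<or> (y \<in> X i \<and> z \<in> X i) \<or> (x \<in> X i \<and> z \<in> X i) then 1 else 0)"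
    by (rule sum.cong[OF refl]) (rule term_triple[OF assms])
  finally show ?thesis .
qed

lemma two_in_inter:
  assumes "u \<in> A" "u \<in> B" "v \<in> A" "v \<in> B" "u \<noteq> v" "finite A" "card (A \<inter> B) \<le> 1"
  shows False
proof -
  have "{u,v} \<subseteq> A \<inter> B" using assms by auto
  then have "card {u,v} \<le> card (A \<inter> B)" using assms(6) by (intro card_mono) auto
  then show False using assms by simp
qed



lemma part1:
  fixes E :: "'a set" and X :: "nat \<Rightarrow> 'a set" and n :: nat and \<sigma> :: "'a set \<Rightarrow> int"
  assumes hyp: "hypergraph E X n"
    and inter_le1: "\<forall>i\<in>{1..n}. \<forall>j\<in>{1..n}. i \<noteq> j \<longrightarrow> card (X i \<inter> X j) \<le> 1"
    and complete: "line_graph_complete X n"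
    and sep: "\<forall>p\<in>{1..n}. \<forall>q\<in>{1..n}. p \<noteq> q \<longrightarrow>
               (\<exists>a\<in>X p. \<exists>b\<in>X q. \<not> (\<exists>i\<in>{1..n}. {a, b} \<subseteq> X i))"
    and pm: "polymatroid E \<sigma>" and agree: "\<forall>A\<in>small_sets E X n. \<sigma> A = hyp_rho X n A"
    and lt: "\<sigma> E < int n"
  shows "indecomposable E \<sigma>"
  unfolding indecomposable_def
proof
  assume "\<exists>(k::nat) (r :: nat \<Rightarrow> 'a set \<Rightarrow> int).
          (\<forall>j<k. matroid_rank E (r j)) \<and> (\<forall>A. A \<subseteq> E \<longrightarrow> \<sigma> A = (\<Sum>j<k. r j A))"
  then obtain k and r :: "nat \<Rightarrow> 'a set \<Rightarrow> int" where mr: "\<And>j. j < k \<Longrightarrow> matroid_rank E (r j)"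
    and dec: "\<And>A. A \<subseteq> E \<Longrightarrow> \<sigma> A = (\<Sum>j<k. r j A)" by blast
  have finE: "finite E" and XE: "\<And>i. i \<in> {1..n} \<Longrightarrow> X i \<subseteq> E \<and> X i \<noteq> {}"
    using hyp unfolding hypergraph_def by auto
  have finX: "\<And>i. i \<in> {1..n} \<Longrightarrow> finite (X i)" using XE finE finite_subset by blast
  have mono: "\<And>A B. A \<subseteq> B \<Longrightarrow> B \<subseteq> E \<Longrightarrow> \<sigma> A \<le> \<sigma> B" and s0: "\<sigma> {} = 0"
    using pm unfolding polymatroid_def by blast+
  have ag1: "\<And>x. x \<in> E \<Longrightarrow> \<sigma> {x} = hyp_rho X n {x}"
    using agree unfolding small_sets_def by auto
  have ag2: "\<And>x y. x \<in> E \<Longrightarrow> y \<in> E \<Longrightarrow> \<sigma> {x,y} = hyp_rho X n {x,y}"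
  proof -
    fix x y assume "x \<in> E" "y \<in> E"
    moreover have "card {x,y} \<le> 2" by (simp add: card_insert_le_m1)
    ultimately show "\<sigma> {x,y} = hyp_rho X n {x,y}" using agree unfolding small_sets_def by auto
  qed
  have ag3: "\<And>i x y z. i \<in> {1..n} \<Longrightarrow> x \<in> X i \<Longrightarrow> y \<in> X i \<Longrightarrow> z \<in> X i \<Longrightarrow> x \<noteq> y \<Longrightarrow> y \<noteq> z \<Longrightarrow> x \<noteq> z
      \<Longrightarrow> \<sigma> {x,y,z} = hyp_rho X n {x,y,z}"
  proof -
    fix i x y z assume a: "i \<in> {1..n}" "x \<in> X i" "y \<in> X i" "z \<in> X i" "x \<noteq> y" "y \<noteq> z" "x \<noteq> z"
    then have "{x,y,z} \<in> small_sets E X n" using XE[OF a(1)] unfolding small_sets_def by auto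
    then show "\<sigma> {x,y,z} = hyp_rho X n {x,y,z}" using agree by auto
  qed
  show False
  proof (cases "n \<le> 1")
    case True
    show False
    proof (cases "n = 0")
      case True
      then show False using mono[of "{}" E] s0 lt by simp
    next
      case False
      with True have n1: "n = 1" by simp
      then obtain a where a: "a \<in> X 1" using XE[of 1] by auto
      have aE: "a \<in> E" using a XE[of 1] n1 by auto
      have "hyp_rho X n {a} = 1" using n1 a unfolding hyp_rho_def by simp
      then have "\<sigma> {a} = 1" using ag1[OF aE] by simp
      then show False using mono[of "{a}" E] aE lt n1 by simp
    qed
  next
    case False
    then have n2: "n \<ge> 2" by simp
    have two: "\<And>i. i \<in> {1..n} \<Longrightarrow> \<exists>a b. a \<in> X i \<and> b \<in> X i \<and> a \<noteq> b"
    proof -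
      fix i assume i: "i \<in> {1..n}"
      obtain q where q: "q \<in> {1..n}" "q \<noteq> i"
      proof (cases "i = 1")
        case True
        have "(2::nat) \<in> {1..n}" using n2 by simp
        then show ?thesis using that[of 2] True by simp
      next
        case False
        have "(1::nat) \<in> {1..n}" using n2 by simp
        then show ?thesis using that[of 1] False by simp
      qed
      have "\<exists>a\<in>X i. \<exists>b\<in>X q. \<not> (\<exists>i\<in>{1..n}. {a, b} \<subseteq> X i)"
      proof -
        have "i \<noteq> q" using q by simp
        with sep[THEN bspec[OF _ i], THEN bspec[OF _ q(1)]] show ?thesis by (rule mp)
      qed
      then obtain a b where ab: "a \<in> X i" "b \<in> X q" "\<not> (\<exists>i\<in>{1..n}. {a, b} \<subseteq> X i)"
        by blast
      have "X i \<inter> X q \<noteq> {}" using complete i q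
      proof -
        have "line_graph_adj X i q" using complete i q unfolding line_graph_complete_def by simp
        then show ?thesis unfolding line_graph_adj_def by simp
      qed
      then obtain e where e: "e \<in> X i" "e \<in> X q" by blast
      have "e \<noteq> a"
      proof
        assume "e = a"
        then have "{a, b} \<subseteq> X q" using e(2) ab(2) by simp
        then have "\<exists>i\<in>{1..n}. {a, b} \<subseteq> X i" using q(1) by (rule bexI)
        then show False using ab(3) by (rule notE[rotated])
      qed
      then show "\<exists>a b. a \<in> X i \<and> b \<in> X i \<and> a \<noteq> b" using e(1) ab(1) by (intro exI conjI)
    qed
    have pairsum: "\<And>x y. x \<in> E \<Longrightarrow> y \<in> E \<Longrightarrow> x \<noteq> y \<Longrightarrow>
        (\<Sum>j<k. dfc (r j) x y) = (\<Sum>i=1..n. if x \<in> X i \<and> y \<in> X i then 1 else 0)"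
    proof -
      fix x y assume a: "x \<in> E" "y \<in> E" "x \<noteq> y"
      have "(\<Sum>j<k. dfc (r j) x y) = \<sigma> {x} + \<sigma> {y} - \<sigma> {x,y}"
        using dec[of "{x}"] dec[of "{y}"] dec[of "{x,y}"] a
        unfolding dfc_def by (simp add: sum.distrib sum_subtractf)
      also have "\<dots> = hyp_rho X n {x} + hyp_rho X n {y} - hyp_rho X n {x,y}"
        using ag1 ag2 a by simp
      also have "\<dots> = (\<Sum>i=1..n. if x \<in> X i \<and> y \<in> X i then 1 else 0)"
        using rho_pair[OF a(3)] .
      finally show "(\<Sum>j<k. dfc (r j) x y) = (\<Sum>i=1..n. if x \<in> X i \<and> y \<in> X i then 1 else 0)" .
    qed
    have pair_in: "\<And>i x y. i \<in> {1..n} \<Longrightarrow> x \<in> X i \<Longrightarrow> y \<in> X i \<Longrightarrow> x \<noteq> y \<Longrightarrow> (\<Sum>j<k. dfc (r j) x y) = 1"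
    proof -
      fix i x y assume a: "i \<in> {1..n}" "x \<in> X i" "y \<in> X i" "x \<noteq> y"
      have "(\<Sum>i'=1..n. (if x \<in> X i' \<and> y \<in> X i' then 1 else 0) :: int) = (\<Sum>i'=1..n. if i' = i then 1 else 0)"
      proof (rule sum.cong[OF refl])
        fix i' assume i': "i' \<in> {1..n}"
        show "(if x \<in> X i' \<and> y \<in> X i' then 1 else 0) = ((if i' = i then 1 else 0) :: int)"
        proof (cases "i' = i")
          case False
          have c: "card (X i \<inter> X i') \<le> 1" using inter_le1 a(1) i' False by auto
          have "\<not> (x \<in> X i' \<and> y \<in> X i')"
          proof
            assume "x \<in> X i' \<and> y \<in> X i'"
            then show False using two_in_inter[of x "X i" "X i'" y] a(2-4) finX[OF a(1)] c by blast
          qed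
          then show ?thesis using False by simp
        next
          case True
          then show ?thesis using a by simp
        qed
      qed
      also have "\<dots> = 1" using a(1) by simp
      finally have s1: "(\<Sum>i'=1..n. (if x \<in> X i' \<and> y \<in> X i' then 1 else 0) :: int) = 1" .
      have "x \<in> E" "y \<in> E" using a XE[OF a(1)] by auto
      from pairsum[OF this a(4)] s1 show "(\<Sum>j<k. dfc (r j) x y) = 1" by simp
    qed
    have tripsum: "\<And>i x y z. i \<in> {1..n} \<Longrightarrow> x \<in> X i \<Longrightarrow> y \<in> X i \<Longrightarrow> z \<in> X i \<Longrightarrow> x \<noteq> y \<Longrightarrow> y \<noteq> z \<Longrightarrow> x \<noteq> z
      \<Longrightarrow> (\<Sum>j<k. r j {x} + r j {y} + r j {z} - r j {x,y,z}) = 2"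
    proof -
      fix i x y z assume a: "i \<in> {1..n}" "x \<in> X i" "y \<in> X i" "z \<in> X i" "x \<noteq> y" "y \<noteq> z" "x \<noteq> z"
      have E3: "x \<in> E" "y \<in> E" "z \<in> E" using a XE by auto
      have "(\<Sum>j<k. r j {x} + r j {y} + r j {z} - r j {x,y,z}) = \<sigma> {x} + \<sigma> {y} + \<sigma> {z} - \<sigma> {x,y,z}"
        using dec[of "{x}"] dec[of "{y}"] dec[of "{z}"] dec[of "{x,y,z}"] E3
        by (simp add: sum.distrib sum_subtractf)
      also have "\<dots> = hyp_rho X n {x} + hyp_rho X n {y} + hyp_rho X n {z} - hyp_rho X n {x,y,z}"
        using ag1 E3 ag3[OF a] by simp
      also have "\<dots> = (\<Sum>i=1..n. if x \<in> X i \<and> y \<in> X i \<and> z \<in> X i then 2 else if (x \<in> X i \<and> y \<in> X i) \<or> (y \<in> X i \<and> z \<in> X i) \<or> (x \<in> X i \<and> z \<in> X i) then 1 else 0)"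
        using rho_triple[OF a(5-7)] .
      also have "\<dots> = (\<Sum>i'=1..n. if i' = i then 2 else 0)"
      proof (rule sum.cong)
        fix i' assume i': "i' \<in> {1..n}"
        show "(if x \<in> X i' \<and> y \<in> X i' \<and> z \<in> X i' then 2 else if (x \<in> X i' \<and> y \<in> X i') \<or> (y \<in> X i' \<and> z \<in> X i') \<or> (x \<in> X i' \<and> z \<in> X i') then 1 else 0) = ((if i' = i then 2 else 0) :: int)"
        proof (cases "i' = i")
          case False
          have c: "card (X i \<inter> X i') \<le> 1" using inter_le1 a(1) i' False by auto
          have "\<not> (x \<in> X i' \<and> y \<in> X i')" using two_in_inter[of x "X i" "X i'" y] a finX c by blast
          moreover have "\<not> (y \<in> X i' \<and> z \<in> X i')" using two_in_inter[of y "X i" "X i'" z] a finX c by blast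
          moreover have "\<not> (x \<in> X i' \<and> z \<in> X i')" using two_in_inter[of x "X i" "X i'" z] a finX c by blast
          ultimately show ?thesis using False by auto
        qed (use a in simp)
      qed simp
      also have "\<dots> = 2" using a(1) by simp
      finally show "(\<Sum>j<k. r j {x} + r j {y} + r j {z} - r j {x,y,z}) = 2" .
    qed
    have tri_eq: "\<And>i x y z j. i \<in> {1..n} \<Longrightarrow> x \<in> X i \<Longrightarrow> y \<in> X i \<Longrightarrow> z \<in> X i \<Longrightarrow> x \<noteq> y \<Longrightarrow> y \<noteq> z \<Longrightarrow> x \<noteq> z
      \<Longrightarrow> j < k \<Longrightarrow> dfc (r j) x y = dfc (r j) x z"
    proof -
      fix i x y z j assume a: "i \<in> {1..n}" "x \<in> X i" "y \<in> X i" "z \<in> X i" "x \<noteq> y" "y \<noteq> z" "x \<noteq> z" and j: "j < k"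
      have E3: "x \<in> E" "y \<in> E" "z \<in> E" using a XE by auto
      define D where "D j = r j {x} + r j {y} + r j {z} - r j {x,y,z}" for j
      have sD: "(\<Sum>j<k. D j) = 2" unfolding D_def using tripsum[OF a] .
      have s1: "(\<Sum>j<k. dfc (r j) x y) = 1" "(\<Sum>j<k. dfc (r j) y z) = 1" "(\<Sum>j<k. dfc (r j) x z) = 1"
        "(\<Sum>j<k. dfc (r j) z y) = 1"
        using pair_in a by auto
      have iy: "\<And>j. j < k \<Longrightarrow> dfc (r j) x y + dfc (r j) y z \<le> D j"
        unfolding D_def using triple_ineq[OF mr E3 a(5-7)] by blast
      have iz: "\<And>j. j < k \<Longrightarrow> dfc (r j) x z + dfc (r j) z y \<le> D j"
      proof -
        fix j assume "j < k"
        have "dfc (r j) x z + dfc (r j) z y \<le> r j {x} + r j {z} + r j {y} - r j {x,z,y}"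
          using triple_ineq[OF mr[OF \<open>j < k\<close>] E3(1) E3(3) E3(2)] a by blast
        moreover have "{x,z,y} = {x,y,z}" by auto
        ultimately show "dfc (r j) x z + dfc (r j) z y \<le> D j" unfolding D_def by simp
      qed
      have "(\<Sum>j<k. D j - (dfc (r j) x y + dfc (r j) y z)) = 0"
        using sD s1 by (simp add: sum_subtractf sum.distrib)
      then have e1: "\<forall>j\<in>{..<k}. D j - (dfc (r j) x y + dfc (r j) y z) = 0"
        using iy by (subst sum_nonneg_eq_0_iff[symmetric]) auto
      have "(\<Sum>j<k. D j - (dfc (r j) x z + dfc (r j) z y)) = 0"
        using sD s1 by (simp add: sum_subtractf sum.distrib)
      then have e2: "\<forall>j\<in>{..<k}. D j - (dfc (r j) x z + dfc (r j) z y) = 0"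
        using iz by (subst sum_nonneg_eq_0_iff[symmetric]) auto
      have "D j - (dfc (r j) x y + dfc (r j) y z) = 0" using e1 j by simp
      moreover have "D j - (dfc (r j) x z + dfc (r j) z y) = 0" using e2 j by simp
      moreover have "dfc (r j) y z = dfc (r j) z y" by (rule dfc_sym)
      ultimately show "dfc (r j) x y = dfc (r j) x z" by linarith
    qed
    have par: "\<And>i. i \<in> {1..n} \<Longrightarrow> \<exists>j<k. \<forall>x\<in>X i. \<forall>y\<in>X i. x \<noteq> y \<longrightarrow> r j {x} = 1 \<and> r j {y} = 1 \<and> r j {x,y} = 1"
    proof -
      fix i assume i: "i \<in> {1..n}"
      obtain a b where ab: "a \<in> X i" "b \<in> X i" "a \<noteq> b" using two[OF i] by blast
      have "\<exists>j<k. 0 < dfc (r j) a b"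
      proof (rule ccontr)
        assume "\<not> ?thesis"
        then have "(\<Sum>j<k. dfc (r j) a b) \<le> (\<Sum>j<k. 0)" by (intro sum_mono) auto
        then show False using pair_in[OF i ab] by simp
      qed
      then obtain j where j: "j < k" "0 < dfc (r j) a b" by blast
      have pa: "\<And>x. x \<in> X i \<Longrightarrow> x \<noteq> a \<Longrightarrow> r j {a} = 1 \<and> r j {x} = 1 \<and> r j {a,x} = 1"
      proof -
        fix x assume x: "x \<in> X i" "x \<noteq> a"
        have "0 < dfc (r j) a x"
        proof (cases "x = b")
          case False
          then show ?thesis using tri_eq[OF i ab(1,2) x(1) ab(3) _ _ j(1)] x j by auto
        qed (use j in simp)
        then show "r j {a} = 1 \<and> r j {x} = 1 \<and> r j {a,x} = 1"
          using dfc_pos[OF mr[OF j(1)]] XE[OF i] ab x by blast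
      qed
      have "\<forall>x\<in>X i. \<forall>y\<in>X i. x \<noteq> y \<longrightarrow> r j {x} = 1 \<and> r j {y} = 1 \<and> r j {x,y} = 1"
      proof (intro ballI impI)
        fix x y assume xy: "x \<in> X i" "y \<in> X i" "x \<noteq> y"
        show "r j {x} = 1 \<and> r j {y} = 1 \<and> r j {x,y} = 1"
        proof (cases "x = a")
          case True then show ?thesis using pa[of y] xy by auto
        next
          case xa: False
          show ?thesis
          proof (cases "y = a")
            case True then show ?thesis using pa[of x] xy by (auto simp: insert_commute)
          next
            case False
            have px: "r j {x} = 1" "r j {a} = 1" "r j {x,a} = 1" using pa[of x] xy xa by (auto simp: insert_commute)
            have py: "r j {a,y} = 1" "r j {y} = 1" using pa[of y] xy False by auto
            have "r j {x,y} = 1" using par_trans[OF mr[OF j(1)], of x a y] px py XE[OF i] xy ab by blast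
            then show ?thesis using px py by simp
          qed
        qed
      qed
      then show "\<exists>j<k. \<forall>x\<in>X i. \<forall>y\<in>X i. x \<noteq> y \<longrightarrow> r j {x} = 1 \<and> r j {y} = 1 \<and> r j {x,y} = 1"
        using j by blast
    qed
    then have "\<forall>i\<in>{1..n}. \<exists>j. j < k \<and> (\<forall>x\<in>X i. \<forall>y\<in>X i. x \<noteq> y \<longrightarrow> r j {x} = 1 \<and> r j {y} = 1 \<and> r j {x,y} = 1)"
      by blast
    from bchoice[OF this] obtain J where J0: "\<forall>i\<in>{1..n}. J i < k \<and> (\<forall>x\<in>X i. \<forall>y\<in>X i. x \<noteq> y \<longrightarrow> r (J i) {x} = 1 \<and> r (J i) {y} = 1 \<and> r (J i) {x,y} = 1)"
      by blast
    have J: "\<And>i. i \<in> {1..n} \<Longrightarrow> J i < k \<and> (\<forall>x\<in>X i. \<forall>y\<in>X i. x \<noteq> y \<longrightarrow> r (J i) {x} = 1 \<and> r (J i) {y} = 1 \<and> r (J i) {x,y} = 1)"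
      using J0 by blast
    have inj: "inj_on J {1..n}"
    proof (rule inj_onI, rule ccontr)
      fix i i' assume i: "i \<in> {1..n}" and i': "i' \<in> {1..n}" and eq: "J i = J i'" and ne: "i \<noteq> i'"
      define j where "j = J i"
      have j: "j < k" using J[OF i] j_def by simp
      have "line_graph_adj X i i'" using complete i i' ne unfolding line_graph_complete_def by simp
      then obtain e where e: "e \<in> X i" "e \<in> X i'" unfolding line_graph_adj_def by blast
      have "\<exists>a\<in>X i. \<exists>b\<in>X i'. \<not> (\<exists>i\<in>{1..n}. {a, b} \<subseteq> X i)"
        using ne sep[THEN bspec[OF _ i], THEN bspec[OF _ i']] by (rule mp[rotated])
      then obtain a b where ab: "a \<in> X i" "b \<in> X i'" "\<not> (\<exists>i\<in>{1..n}. {a, b} \<subseteq> X i)"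
        by blast
      have ae: "a \<noteq> e"
      proof
        assume "a = e"
        then have "{a, b} \<subseteq> X i'" using e(2) ab(2) by simp
        then have "\<exists>i\<in>{1..n}. {a, b} \<subseteq> X i" using i' by (rule bexI)
        then show False using ab(3) by (rule notE[rotated])
      qed
      have be: "b \<noteq> e"
      proof
        assume "b = e"
        then have "{a, b} \<subseteq> X i" using e(1) ab(1) by simp
        then have "\<exists>i\<in>{1..n}. {a, b} \<subseteq> X i" using i by (rule bexI)
        then show False using ab(3) by (rule notE[rotated])
      qed
      have abne: "a \<noteq> b"
      proof
        assume "a = b"
        then have "{a, b} \<subseteq> X i" using ab(1) by simp
        then have "\<exists>i\<in>{1..n}. {a, b} \<subseteq> X i" using i by (rule bexI)
        then show False using ab(3) by (rule notE[rotated])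
      qed
      have E3: "a \<in> E" "b \<in> E" "e \<in> E" using ab(1,2) e(1) XE[OF i] XE[OF i'] by auto
      have Ji: "\<forall>x\<in>X i. \<forall>y\<in>X i. x \<noteq> y \<longrightarrow> r j {x} = 1 \<and> r j {y} = 1 \<and> r j {x,y} = 1"
        using J[OF i] unfolding j_def by (rule conjunct2)
      have Ji': "\<forall>x\<in>X i'. \<forall>y\<in>X i'. x \<noteq> y \<longrightarrow> r j {x} = 1 \<and> r j {y} = 1 \<and> r j {x,y} = 1"
        using J[OF i'] unfolding j_def eq by (rule conjunct2)
      have p1: "r j {a} = 1 \<and> r j {e} = 1 \<and> r j {a,e} = 1" using Ji[rule_format, OF ab(1) e(1) ae] .
      have p2: "r j {e} = 1 \<and> r j {b} = 1 \<and> r j {e,b} = 1" using Ji'[rule_format, OF e(2) ab(2) be[symmetric]] by (simp add: insert_commute)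
      have "r j {a,b} = 1" using par_trans[OF mr[OF j] E3(1) E3(3) E3(2)] p1 p2 by simp
      then have pos: "0 < dfc (r j) a b" using p1 p2 unfolding dfc_def by simp
      have "(\<Sum>j<k. dfc (r j) a b) = 0"
      proof -
        have "(\<Sum>j<k. dfc (r j) a b) = (\<Sum>i=1..n. (if a \<in> X i \<and> b \<in> X i then 1 else 0))"
          by (rule pairsum[OF E3(1,2) abne])
        also have "\<dots> = 0"
        proof (rule sum.neutral, rule ballI)
          fix i'' assume "i'' \<in> {1..n}"
          then have "\<not> {a, b} \<subseteq> X i''" using ab(3) by blast
          then show "(if a \<in> X i'' \<and> b \<in> X i'' then 1 else 0) = (0::int)" by simp
        qed
        finally show ?thesis .
      qed
      moreover have "(\<Sum>j<k. dfc (r j) a b) \<ge> dfc (r j) a b"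
      proof (rule member_le_sum)
        show "j \<in> {..<k}" using j by simp
        fix j' assume "j' \<in> {..<k} - {j}"
        then show "0 \<le> dfc (r j') a b" using dfc_nonneg[OF mr E3(1,2) abne] by simp
      qed simp
      ultimately show False using pos by simp
    qed
    have pos: "\<And>i. i \<in> {1..n} \<Longrightarrow> 1 \<le> r (J i) E"
    proof -
      fix i assume i: "i \<in> {1..n}"
      obtain a b where ab: "a \<in> X i" "b \<in> X i" "a \<noteq> b" using two[OF i] by blast
      have Ji: "\<forall>x\<in>X i. \<forall>y\<in>X i. x \<noteq> y \<longrightarrow> r (J i) {x} = 1 \<and> r (J i) {y} = 1 \<and> r (J i) {x,y} = 1"
        using J[OF i] by (rule conjunct2)
      have "r (J i) {a} = 1" using Ji[rule_format, OF ab] by simp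
      moreover have "r (J i) {a} \<le> r (J i) E"
      proof -
        have "J i < k" using J[OF i] by (rule conjunct1)
        then have "matroid_rank E (r (J i))" by (rule mr)
        then have m: "\<forall>A B. A \<subseteq> B \<and> B \<subseteq> E \<longrightarrow> r (J i) A \<le> r (J i) B"
          unfolding matroid_rank_def polymatroid_def by (elim conjE)
        have "{a} \<subseteq> E" using ab(1) XE[OF i] by auto
        then show ?thesis using m by simp
      qed
      ultimately show "1 \<le> r (J i) E" by simp
    qed
    have nn: "\<And>j. j < k \<Longrightarrow> 0 \<le> r j E" using mr unfolding matroid_rank_def by blast
    have sub: "J ` {1..n} \<subseteq> {..<k}" using J by auto
    have "\<sigma> E = (\<Sum>j<k. r j E)" using dec by simp
    also have "\<dots> \<ge> (\<Sum>j\<in>J ` {1..n}. r j E)"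
      by (rule sum_mono2) (use sub nn in auto)
    finally have "(\<Sum>j\<in>J ` {1..n}. r j E) \<le> \<sigma> E" .
    moreover have "(\<Sum>j\<in>J ` {1..n}. r j E) = (\<Sum>i=1..n. r (J i) E)"
      using sum.reindex[OF inj] by simp
    moreover have "(\<Sum>i=1..n. r (J i) E) \<ge> (\<Sum>i=1..n. (1::int))"
      using pos by (intro sum_mono) auto
    ultimately show False using lt by simp
  qed
qed



lemma rho_poly:
  assumes "finite E"
  shows "polymatroid E (hyp_rho X n)"
proof -
  have ind: "\<And>A i. A \<subseteq> E \<Longrightarrow> min (int (card (A \<inter> X i))) 1 = (if A \<inter> X i = {} then 0 else 1)"
    using term_ind assms finite_subset by blast
  have "hyp_rho X n {} = 0" unfolding hyp_rho_def by simp
  moreover have "\<forall>A B. A \<subseteq> B \<and> B \<subseteq> E \<longrightarrow> hyp_rho X n A \<le> hyp_rho X n B"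
  proof (intro allI impI)
    fix A B assume ab: "A \<subseteq> B \<and> B \<subseteq> E"
    then have aE: "A \<subseteq> E" and bE: "B \<subseteq> E" by auto
    show "hyp_rho X n A \<le> hyp_rho X n B" unfolding hyp_rho_def
    proof (rule sum_mono)
      fix i
      have "A \<inter> X i \<noteq> {} \<Longrightarrow> B \<inter> X i \<noteq> {}" using ab by blast
      then show "min (int (card (A \<inter> X i))) 1 \<le> min (int (card (B \<inter> X i))) 1"
        unfolding ind[OF aE] ind[OF bE] by simp
    qed
  qed
  moreover have "\<forall>A B. A \<subseteq> E \<and> B \<subseteq> E \<longrightarrow> hyp_rho X n (A \<union> B) + hyp_rho X n (A \<inter> B) \<le> hyp_rho X n A + hyp_rho X n B"
  proof (intro allI impI)
    fix A B assume ab: "A \<subseteq> E \<and> B \<subseteq> E"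
    then have aE: "A \<subseteq> E" and bE: "B \<subseteq> E" and uE: "A \<union> B \<subseteq> E" and iE: "A \<inter> B \<subseteq> E" by auto
    have "hyp_rho X n (A \<union> B) + hyp_rho X n (A \<inter> B) =
      (\<Sum>i=1..n. min (int (card ((A \<union> B) \<inter> X i))) 1 + min (int (card ((A \<inter> B) \<inter> X i))) 1)"
      unfolding hyp_rho_def by (simp only: sum.distrib)
    also have "\<dots> \<le> (\<Sum>i=1..n. min (int (card (A \<inter> X i))) 1 + min (int (card (B \<inter> X i))) 1)"
    proof (rule sum_mono)
      fix i
      show "min (int (card ((A \<union> B) \<inter> X i))) 1 + min (int (card ((A \<inter> B) \<inter> X i))) 1
        \<le> min (int (card (A \<inter> X i))) 1 + min (int (card (B \<inter> X i))) 1"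
        unfolding ind[OF aE] ind[OF bE] ind[OF uE] ind[OF iE]
        by (cases "A \<inter> X i = {}"; cases "B \<inter> X i = {}") (simp_all add: Int_Un_distrib2, blast+)
    qed
    also have "\<dots> = hyp_rho X n A + hyp_rho X n B"
      unfolding hyp_rho_def by (simp only: sum.distrib)
    finally show "hyp_rho X n (A \<union> B) + hyp_rho X n (A \<inter> B) \<le> hyp_rho X n A + hyp_rho X n B" .
  qed
  ultimately show ?thesis unfolding polymatroid_def by blast
qed


lemma trunc_poly:
  assumes "polymatroid E f" "0 \<le> s"
  shows "polymatroid E (truncation f s)"
proof -
  note P = assms(1)[unfolded polymatroid_def]
  note e = P[THEN conjunct1] and m = P[THEN conjunct2, THEN conjunct1] and sm = P[THEN conjunct2, THEN conjunct2]
  have "truncation f s {} = 0" using e assms(2) unfolding truncation_def by simp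
  moreover have "\<forall>A B. A \<subseteq> B \<and> B \<subseteq> E \<longrightarrow> truncation f s A \<le> truncation f s B"
  proof (intro allI impI)
    fix A B assume "A \<subseteq> B \<and> B \<subseteq> E"
    then have "f A \<le> f B" by (rule m[rule_format])
    then show "truncation f s A \<le> truncation f s B" unfolding truncation_def by simp
  qed
  moreover have "\<forall>A B. A \<subseteq> E \<and> B \<subseteq> E \<longrightarrow> truncation f s (A \<union> B) + truncation f s (A \<inter> B) \<le> truncation f s A + truncation f s B"
  proof (intro allI impI)
    fix A B assume ab: "A \<subseteq> E \<and> B \<subseteq> E"
    have 1: "f (A \<union> B) + f (A \<inter> B) \<le> f A + f B" using ab by (rule sm[rule_format])
    have 2: "f (A \<inter> B) \<le> f A" "f (A \<inter> B) \<le> f B" using ab by (auto intro!: m[rule_format])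
    show "truncation f s (A \<union> B) + truncation f s (A \<inter> B) \<le> truncation f s A + truncation f s B"
      unfolding truncation_def using 1 2 by linarith
  qed
  ultimately show ?thesis unfolding polymatroid_def by blast
qed


theorem theorem2p15:
  fixes E :: "'a set" and X :: "nat \<Rightarrow> 'a set" and n :: nat
    and \<sigma> :: "'a set \<Rightarrow> int" and s :: int
  assumes hyp: "hypergraph E X n"
    and inter_le1: "\<forall>i\<in>{1..n}. \<forall>j\<in>{1..n}. i \<noteq> j \<longrightarrow> card (X i \<inter> X j) \<le> 1"
    and complete: "line_graph_complete X n"
    and sep: "\<forall>p\<in>{1..n}. \<forall>q\<in>{1..n}. p \<noteq> q \<longrightarrow>
               (\<exists>a\<in>X p. \<exists>b\<in>X q. \<not> (\<exists>i\<in>{1..n}. {a, b} \<subseteq> X i))"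
  shows "(polymatroid E \<sigma> \<and> (\<forall>A\<in>small_sets E X n. \<sigma> A = hyp_rho X n A) \<and> \<sigma> E < int n
            \<longrightarrow> indecomposable E \<sigma>)
         \<and> (Max (hyp_rho X n ` small_sets E X n) \<le> s \<and> s < int n
            \<longrightarrow> indecomposable E (truncation (hyp_rho X n) s))"
proof (intro conjI impI)
  assume a: "polymatroid E \<sigma> \<and> (\<forall>A\<in>small_sets E X n. \<sigma> A = hyp_rho X n A) \<and> \<sigma> E < int n"
  show "indecomposable E \<sigma>"
    by (rule part1[OF hyp inter_le1 complete sep a[THEN conjunct1] a[THEN conjunct2, THEN conjunct1]
        a[THEN conjunct2, THEN conjunct2]])
next
  assume a: "Max (hyp_rho X n ` small_sets E X n) \<le> s \<and> s < int n"
  have finE: "finite E" using hyp unfolding hypergraph_def by simp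
  have "small_sets E X n \<subseteq> Pow E" unfolding small_sets_def by auto
  then have fin: "finite (small_sets E X n)" using finE finite_subset by blast
  have le: "\<And>A. A \<in> small_sets E X n \<Longrightarrow> hyp_rho X n A \<le> s"
  proof -
    fix A assume "A \<in> small_sets E X n"
    then have "hyp_rho X n A \<le> Max (hyp_rho X n ` small_sets E X n)"
      using fin by (intro Max_ge) auto
    then show "hyp_rho X n A \<le> s" using a by simp
  qed
  have "{} \<in> small_sets E X n" unfolding small_sets_def by simp
  from le[OF this] have s0: "0 \<le> s" unfolding hyp_rho_def by simp
  have pm: "polymatroid E (truncation (hyp_rho X n) s)"
    by (rule trunc_poly[OF rho_poly[OF finE] s0])
  have ag: "\<forall>A\<in>small_sets E X n. truncation (hyp_rho X n) s A = hyp_rho X n A"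
    using le unfolding truncation_def by simp
  have lt: "truncation (hyp_rho X n) s E < int n" using a[THEN conjunct2] unfolding truncation_def by linarith
  show "indecomposable E (truncation (hyp_rho X n) s)"
    by (rule part1[OF hyp inter_le1 complete sep pm ag lt])
qed

end
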